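(* (i) No two distinct chordal hyperplanes meet in $\mathbb{CH}^{10}$. (ii) If a discriminant hyperplane and a chordal hyperplane meet in $\mathbb{CH}^{10}$, then they are orthogonal.
   Context: Let $\omega$ be a primitive cube root of unity, $\mathcal{E}=\mathbb{Z}[\omega]$, $\theta=\omega-\bar\omega=\sqrt{-3}$. Let $\Lambda=\mathcal{E}^{11}$ with Hermitian form whose Gram matrix is $(3)\oplus M\oplus M\oplus\begin{pmatrix}0&\theta\\ \bar\theta&0\end{pmatrix}$, where $M$ is the $4\times4$ matrix with $3$ on the diagonal, $\theta$ at $(i,i+1)$, $\bar\theta$ at $(i+1,i)$, $0$ elsewhere. $\mathbb{CH}^{10}$ is the set of negative lines in $\Lambda\otimes_{\mathcal{E}}\mathbb{C}$. A root is $r\in\Lambda$ with $\langle r,r\rangle=3$; nodal if $\langle r,\Lambda\rangle=\theta\mathcal{E}$, chordal if $\langle r,\Lambda\rangle=3\mathcal{E}$. A discriminant (resp. chordal) hyperplane is $r^\perp\cap\mathbb{CH}^{10}$ for a nodal (resp. chordal) root $r$. Hyperplanes $r^\perp$ and $s^\perp$ are orthogonal when $\langle r,s\rangle=0$. *)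

theory Defs
  imports Complex_Main
begin

text \<open>Eisenstein integers.  \<omega> = exp(2\<pi>i/3), \<theta> = \<omega> - conj \<omega> = sqrt(-3).\<close>

definition omega :: complex where
  "omega = Complex (-1/2) (sqrt 3 / 2)"

definition theta :: complex where
  "theta = omega - cnj omega"

definition Eis :: "complex set" where
  "Eis = {of_int a + of_int b * omega | a b. True}"

text \<open>Vectors of C^11 are represented as functions nat => complex supported on {0..<11}.\<close>

definition cvec :: "(nat \<Rightarrow> complex) set" where
  "cvec = {x. \<forall>i\<ge>11. x i = 0}"

definition Lam :: "(nat \<Rightarrow> complex) set" where
  "Lam = {x \<in> cvec. \<forall>i<11. x i \<in> Eis}"

text \<open>Gram matrix (3) + M + M + [[0,theta],[conj theta,0]], indices 0..10:
  index 0 is the (3) block, 1..4 and 5..8 are the two M blocks, 9..10 the hyperbolic block.\<close>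

definition gram :: "nat \<Rightarrow> nat \<Rightarrow> complex" where
  "gram i j =
     (if i = j then (if i \<le> 8 then 3 else 0)
      else if j = Suc i \<and> i \<in> {1,2,3,5,6,7,9} then theta
      else if i = Suc j \<and> j \<in> {1,2,3,5,6,7,9} then cnj theta
      else 0)"

definition herm :: "(nat \<Rightarrow> complex) \<Rightarrow> (nat \<Rightarrow> complex) \<Rightarrow> complex" where
  "herm x y = (\<Sum>i<11. \<Sum>j<11. x i * gram i j * cnj (y j))"

definition is_root :: "(nat \<Rightarrow> complex) \<Rightarrow> bool" where
  "is_root r \<longleftrightarrow> r \<in> Lam \<and> herm r r = 3"

definition nodal_root :: "(nat \<Rightarrow> complex) \<Rightarrow> bool" where
  "nodal_root r \<longleftrightarrow> is_root r \<and> (\<lambda>x. herm r x) ` Lam = {theta * e | e. e \<in> Eis}"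

definition chordal_root :: "(nat \<Rightarrow> complex) \<Rightarrow> bool" where
  "chordal_root r \<longleftrightarrow> is_root r \<and> (\<lambda>x. herm r x) ` Lam = {3 * e | e. e \<in> Eis}"

definition cline :: "(nat \<Rightarrow> complex) \<Rightarrow> (nat \<Rightarrow> complex) set" where
  "cline v = {(\<lambda>i. c * v i) | c. True}"

definition CH10 :: "(nat \<Rightarrow> complex) set set" where
  "CH10 = {cline v | v. v \<in> cvec \<and> Re (herm v v) < 0}"

definition hyperplane :: "(nat \<Rightarrow> complex) \<Rightarrow> (nat \<Rightarrow> complex) set set" where
  "hyperplane r = {L \<in> CH10. \<forall>v\<in>L. herm v r = 0}"

end

theory Submission
  imports Defs
begin


lemma omega_sq: "omega * omega = -1 - omega"
  by (simp add: omega_def complex_eq_iff field_simps)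

lemma cnj_omega: "cnj omega = -1 - omega"
  by (simp add: omega_def complex_eq_iff)

lemma theta_eq: "theta = 1 + 2 * omega"
  by (simp add: theta_def cnj_omega)

lemma cnj_theta: "cnj theta = - theta"
  by (simp add: theta_def)

lemma theta_sq: "theta * theta = -3"
proof -
  have "theta * theta = 1 + 4 * omega + 4 * (omega * omega)"
    by (simp add: theta_eq algebra_simps)
  also have "\<dots> = -3" by (simp add: omega_sq)
  finally show ?thesis .
qed

lemma theta_nz: "theta \<noteq> 0"
  using theta_sq by auto

lemma Eis_iff: "z \<in> Eis \<longleftrightarrow> (\<exists>a b. z = of_int a + of_int b * omega)"
  by (auto simp: Eis_def)

lemma Eis_add[intro]: assumes "x \<in> Eis" "y \<in> Eis" shows "x + y \<in> Eis"
proof -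
  obtain a b where x: "x = of_int a + of_int b * omega" using assms Eis_iff by auto
  obtain c d where y: "y = of_int c + of_int d * omega" using assms Eis_iff by auto
  have "x + y = of_int (a+c) + of_int (b+d) * omega" by (simp add: x y algebra_simps)
  then show ?thesis unfolding Eis_iff by blast
qed

lemma Eis_uminus[intro]: assumes "x \<in> Eis" shows "- x \<in> Eis"
proof -
  obtain a b where x: "x = of_int a + of_int b * omega" using assms Eis_iff by auto
  have "- x = of_int (-a) + of_int (-b) * omega" by (simp add: x algebra_simps)
  then show ?thesis unfolding Eis_iff by blast
qed

lemma Eis_diff[intro]: "x \<in> Eis \<Longrightarrow> y \<in> Eis \<Longrightarrow> x - y \<in> Eis"
  using Eis_add[of x "-y"] Eis_uminus[of y] by simp

lemma Eis_mult[intro]: assumes "x \<in> Eis" "y \<in> Eis" shows "x * y \<in> Eis"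
proof -
  obtain a b where x: "x = of_int a + of_int b * omega" using assms Eis_iff by auto
  obtain c d where y: "y = of_int c + of_int d * omega" using assms Eis_iff by auto
  have "x * y = of_int a * of_int c + (of_int a * of_int d + of_int b * of_int c) * omega
         + of_int b * of_int d * (omega * omega)" by (simp add: x y algebra_simps)
  also have "\<dots> = of_int (a * c - b * d) + of_int (a * d + b * c - b * d) * omega"
    by (simp add: omega_sq algebra_simps)
  finally show ?thesis unfolding Eis_iff by blast
qed

lemma Eis_of_int[intro]: "of_int n \<in> Eis"
  unfolding Eis_iff by (rule exI[of _ n], rule exI[of _ 0], simp)

lemma Eis_0[intro]: "0 \<in> Eis" using Eis_of_int[of 0] by simp
lemma Eis_1[intro]: "1 \<in> Eis" using Eis_of_int[of 1] by simp
lemma Eis_3[intro]: "3 \<in> Eis" using Eis_of_int[of 3] by simp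
lemma Eis_omega[intro]: "omega \<in> Eis" 
  unfolding Eis_iff by (rule exI[of _ 0], rule exI[of _ 1], simp)
lemma Eis_theta[intro]: "theta \<in> Eis"
  unfolding theta_eq by (intro Eis_add Eis_mult Eis_1 Eis_omega) (use Eis_of_int[of 2] in simp)

lemma Eis_cnj[intro]: "x \<in> Eis \<Longrightarrow> cnj x \<in> Eis"
  unfolding Eis_iff
  apply clarify
  subgoal for a b by (rule exI[of _ "a-b"], rule exI[of _ "-b"], simp add: cnj_omega algebra_simps)
  done

lemma Eis_norm: assumes "x \<in> Eis" shows "\<exists>n::int. (cmod x)^2 = of_int n"
proof -
  obtain a b where x: "x = of_int a + of_int b * omega" using assms Eis_iff by auto
  have "(cmod x)^2 = (Re x)^2 + (Im x)^2" by (simp add: cmod_power2)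
  also have "\<dots> = (of_int a - of_int b / 2)^2 + (of_int b * sqrt 3 / 2)^2"
    by (simp add: x omega_def)
  also have "\<dots> = of_int (a*a - a*b + b*b)" by (simp add: power2_eq_square algebra_simps)
  finally show ?thesis by blast
qed

lemma Eis_small: assumes "x \<in> Eis" "cmod x < 1" shows "x = 0"
proof -
  obtain n::int where n: "(cmod x)^2 = of_int n" using Eis_norm assms by blast
  have "(cmod x)^2 < 1" using assms(2) by (simp add: power_less_one_iff)
  then have "n < 1" using n by simp
  moreover have "n \<ge> 0" using n by (metis of_int_0_le_iff zero_le_power2)
  ultimately have "n = 0" by simp
  then show ?thesis using n by simp
qed

lemma one_not_theta: assumes "e \<in> Eis" shows "1 \<noteq> theta * e"
proof
  assume h: "1 = theta * e"
  obtain n::int where n: "(cmod e)^2 = of_int n" using Eis_norm assms by blast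
  have ct: "(cmod theta)^2 = 3"
  proof -
    have "(cmod theta)^2 = Re (theta * cnj theta)" by (simp add: complex_mult_cnj cmod_power2)
    also have "\<dots> = 3" using theta_sq by (simp add: cnj_theta)
    finally show ?thesis .
  qed
  have "1 = (cmod (theta * e))^2" using h by (metis norm_one one_power2)
  also have "\<dots> = 3 * of_int n" by (simp add: norm_mult power_mult_distrib ct n)
  finally have "(1::real) = 3 * of_int n" .
  then have "(1::int) = 3 * n" by linarith
  then show False by presburger
qed


definition blk :: "(nat \<Rightarrow> complex) \<Rightarrow> (nat \<Rightarrow> complex) \<Rightarrow> nat \<Rightarrow> complex" where
  "blk x y b = 3 * (x b * cnj (y b) + x (b+1) * cnj (y (b+1)) + x (b+2) * cnj (y (b+2)) + x (b+3) * cnj (y (b+3)))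
     + theta * (x b * cnj (y (b+1)) + x (b+1) * cnj (y (b+2)) + x (b+2) * cnj (y (b+3)))
     + cnj theta * (x (b+1) * cnj (y b) + x (b+2) * cnj (y (b+1)) + x (b+3) * cnj (y (b+2)))"

lemma lessThan_11: "{..<11::nat} = {0,1,2,3,4,5,6,7,8,9,10}"
  by (simp add: lessThan_nat_numeral lessThan_Suc insert_commute)

lemma herm_expand: "herm x y = 3 * x 0 * cnj (y 0) + blk x y 1 + blk x y 5
   + theta * x 9 * cnj (y 10) + cnj theta * x 10 * cnj (y 9)"
  unfolding herm_def blk_def lessThan_11
  by (simp add: gram_def algebra_simps eval_nat_numeral)


lemma blk_id_gen:
  fixes t a b c d a' b' c' d' :: complex
  assumes "t * t = -3"
  shows "3 * (a * a' + b * b' + c * c' + d * d') + t * (a * b' + b * c' + c * d') + (-t) * (b * a' + c * b' + d * c')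
    = (1/3) * ((3*a + (-t)*b) * (3*a' + t*b')) + (1/2) * ((2*b + (-t)*c) * (2*b' + t*c'))
      + (2/3) * ((3/2*c + (-t)*d) * (3/2*c' + t*d')) + d * d'"
proof -
  have "(1/3) * ((3*a + (-t)*b) * (3*a' + t*b')) + (1/2) * ((2*b + (-t)*c) * (2*b' + t*c'))
      + (2/3) * ((3/2*c + (-t)*d) * (3/2*c' + t*d')) + d * d'
   = 3 * (a * a' + b * b' + c * c' + d * d') + t * (a * b' + b * c' + c * d') + (-t) * (b * a' + c * b' + d * c')
     - (t * t + 3) * (b * b' / 3 + c * c' / 2 + 2 * d * d' / 3)"
    by (simp add: field_simps)
  then show ?thesis using assms by simp
qed


definition Bq :: "(nat \<Rightarrow> complex) \<Rightarrow> nat \<Rightarrow> complex" where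
  "Bq x b = (1/3) * ((3*x b + (-theta)*x (b+1)) * (3*cnj (x b) + theta*cnj (x (b+1))))
      + (1/2) * ((2*x (b+1) + (-theta)*x (b+2)) * (2*cnj (x (b+1)) + theta*cnj (x (b+2))))
      + (2/3) * ((3/2*x (b+2) + (-theta)*x (b+3)) * (3/2*cnj (x (b+2)) + theta*cnj (x (b+3))))
      + x (b+3) * cnj (x (b+3))"

lemma blk_self: "blk x x b = Bq x b"
  unfolding blk_def Bq_def cnj_theta by (rule blk_id_gen[OF theta_sq])

lemma Re_nq: "Re (z * cnj z) = (cmod z)^2"
  by (simp add: complex_mult_cnj cmod_power2)

lemma Re_nq': assumes "z' = cnj z" shows "Re (z * z') = (cmod z)^2"
  using assms Re_nq by simp

definition nq :: "complex \<Rightarrow> complex" where "nq z = z * cnj z"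

lemma Re_nq2: "Re (nq z) = (cmod z)^2" unfolding nq_def by (rule Re_nq)
lemma Im_nq: "Im (nq z) = 0" unfolding nq_def by simp

lemma Bq_nq: "Bq x b = (1/3) * nq (3*x b + (-theta)*x (b+1))
      + (1/2) * nq (2*x (b+1) + (-theta)*x (b+2))
      + (2/3) * nq (3/2*x (b+2) + (-theta)*x (b+3))
      + nq (x (b+3))"
  unfolding Bq_def nq_def by (simp add: cnj_theta)

lemma Re_Bq: "Re (Bq x b) = (1/3) * (cmod (3*x b + (-theta)*x (b+1)))^2
      + (1/2) * (cmod (2*x (b+1) + (-theta)*x (b+2)))^2
      + (2/3) * (cmod (3/2*x (b+2) + (-theta)*x (b+3)))^2
      + (cmod (x (b+3)))^2"
  unfolding Bq_nq by (simp add: Re_nq2 Im_nq)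


definition Pf :: "(nat \<Rightarrow> complex) \<Rightarrow> complex" where "Pf x = x 9 + (-theta) * x 10 / 2"
definition Nf :: "(nat \<Rightarrow> complex) \<Rightarrow> complex" where "Nf x = x 9 + theta * x 10 / 2"

lemma herm_self: "herm x x = 3 * nq (x 0) + Bq x 1 + Bq x 5 + nq (Pf x) - nq (Nf x)"
proof -
  have "theta * x 9 * cnj (x 10) + cnj theta * x 10 * cnj (x 9) = nq (Pf x) - nq (Nf x)"
    unfolding nq_def Pf_def Nf_def by (simp add: cnj_theta field_simps)
  then show ?thesis unfolding herm_expand blk_self by (simp add: nq_def)
qed

lemma Re_herm_self: "Re (herm x x) = 3 * (cmod (x 0))^2 + Re (Bq x 1) + Re (Bq x 5)
   + (cmod (Pf x))^2 - (cmod (Nf x))^2"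
  unfolding herm_self by (simp add: Re_nq2 Im_nq)

lemma Re_Bq_nonneg: "Re (Bq x b) \<ge> 0"
  unfolding Re_Bq by simp

lemma sum4_zero: "(p::real) \<ge> 0 \<Longrightarrow> q \<ge> 0 \<Longrightarrow> r \<ge> 0 \<Longrightarrow> s \<ge> 0 \<Longrightarrow>
  1/3*p + 1/2*q + 2/3*r + s = 0 \<Longrightarrow> p = 0 \<and> q = 0 \<and> r = 0 \<and> s = 0" by linarith

lemma Re_Bq_zero: assumes "Re (Bq x b) = 0"
  shows "x b = 0 \<and> x (b+1) = 0 \<and> x (b+2) = 0 \<and> x (b+3) = 0"
proof -
  have "(cmod (3*x b + (-theta)*x (b+1)))^2 = 0" "(cmod (2*x (b+1) + (-theta)*x (b+2)))^2 = 0"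
       "(cmod (3/2*x (b+2) + (-theta)*x (b+3)))^2 = 0" "(cmod (x (b+3)))^2 = 0"
    using sum4_zero[OF zero_le_power2 zero_le_power2 zero_le_power2 zero_le_power2 assms[unfolded Re_Bq]]
    by auto
  then have h: "3*x b + (-theta)*x (b+1) = 0" "2*x (b+1) + (-theta)*x (b+2) = 0"
       "3/2*x (b+2) + (-theta)*x (b+3) = 0" "x (b+3) = 0" by auto
  then have "x (b+2) = 0" by simp
  then have "x (b+1) = 0" using h(2) by simp
  then have "x b = 0" using h(1) by simp
  then show ?thesis using h \<open>x (b+1) = 0\<close> \<open>x (b+2) = 0\<close> by simp
qed

lemma herm_lin1: "herm (\<lambda>i. a * x i + b * y i) z = a * herm x z + b * herm y z"
  unfolding herm_def by (simp add: distrib_right sum.distrib sum_distrib_left mult.assoc)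

lemma herm_lin2: "herm z (\<lambda>i. a * x i + b * y i) = cnj a * herm z x + cnj b * herm z y"
  unfolding herm_def by (simp add: distrib_left sum.distrib sum_distrib_left algebra_simps)

lemma herm_scale1: "herm (\<lambda>i. a * x i) z = a * herm x z"
  unfolding herm_def by (simp add: sum_distrib_left mult.assoc)

lemma herm_scale2: "herm z (\<lambda>i. a * x i) = cnj a * herm z x"
  unfolding herm_def by (simp add: sum_distrib_left algebra_simps)

lemma herm_cnj: "herm y x = cnj (herm x y)"
  unfolding herm_expand blk_def by (simp add: cnj_theta algebra_simps)


lemma Re_herm_lower: "Re (herm x x) + (cmod (Nf x))^2 \<ge> 0"
  unfolding Re_herm_self using Re_Bq_nonneg[of x 1] Re_Bq_nonneg[of x 5]
  by (simp add: add_nonneg_nonneg)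

lemma herm_zero_vec: assumes "Re (herm x x) + (cmod (Nf x))^2 = 0" "Nf x = 0"
  shows "\<forall>i<11. x i = 0"
proof -
  have h: "3 * (cmod (x 0))^2 + Re (Bq x 1) + Re (Bq x 5) + (cmod (Pf x))^2 = 0"
    using assms unfolding Re_herm_self by simp
  have z: "(cmod (x 0))^2 = 0" "Re (Bq x 1) = 0" "Re (Bq x 5) = 0" "(cmod (Pf x))^2 = 0"
    using h Re_Bq_nonneg[of x 1] Re_Bq_nonneg[of x 5] zero_le_power2[of "cmod (x 0)"]
      zero_le_power2[of "cmod (Pf x)"] by linarith+
  have a: "x 1 = 0 \<and> x 2 = 0 \<and> x 3 = 0 \<and> x 4 = 0" using Re_Bq_zero[OF z(2)] by (simp add: eval_nat_numeral)
  have b: "x 5 = 0 \<and> x 6 = 0 \<and> x 7 = 0 \<and> x 8 = 0" using Re_Bq_zero[OF z(3)] by (simp add: eval_nat_numeral)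
  have p: "Pf x = 0" using z(4) by simp
  have "Pf x + Nf x = 2 * x 9" unfolding Pf_def Nf_def by simp
  then have x9: "x 9 = 0" using p assms(2) by simp
  have "Nf x - Pf x = theta * x 10" unfolding Pf_def Nf_def by simp
  then have x10: "x 10 = 0" using p assms(2) theta_nz by simp
  have x0: "x 0 = 0" using z(1) by simp
  show ?thesis
  proof (intro allI impI)
    fix i :: nat assume "i < 11"
    then have "i = 0 \<or> i = 1 \<or> i = 2 \<or> i = 3 \<or> i = 4 \<or> i = 5 \<or> i = 6 \<or> i = 7 \<or> i = 8 \<or> i = 9 \<or> i = 10"
      by presburger
    then show "x i = 0" using a b x9 x10 x0 by (elim disjE) simp_all
  qed
qed

lemma lorentz:
  assumes v: "Re (herm v v) < 0" and uv: "herm u v = 0" and uu: "Re (herm u u) \<le> 0"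
  shows "\<forall>i<11. u i = 0"
proof -
  have vu: "herm v u = 0" using uv herm_cnj[of v u] by simp
  have Nv: "(cmod (Nf v))^2 > 0" using Re_herm_lower[of v] v by linarith
  define w where "w = (\<lambda>i. Nf v * u i + (- Nf u) * v i)"
  have Nw: "Nf w = 0" unfolding w_def Nf_def by (simp add: field_simps)
  have hw: "herm w w = Nf v * cnj (Nf v) * herm u u + (- Nf u) * cnj (- Nf u) * herm v v"
    unfolding w_def herm_lin1 herm_lin2 using uv vu by (simp add: algebra_simps)
  have "Re (herm w w) = (cmod (Nf v))^2 * Re (herm u u) + (cmod (Nf u))^2 * Re (herm v v)"
    unfolding hw using Re_nq[of "Nf v"] Re_nq[of "- Nf u"] 
    by (simp add: complex_mult_cnj cmod_power2)
  moreover have "Re (herm w w) \<ge> 0" using Re_herm_lower[of w] Nw by simp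
  moreover have "(cmod (Nf v))^2 * Re (herm u u) \<le> 0" using Nv uu
    by (simp add: mult_nonneg_nonpos)
  ultimately have "(cmod (Nf u))^2 * Re (herm v v) \<ge> 0" by linarith
  then have "(cmod (Nf u))^2 \<le> 0" using v by (simp add: mult_le_0_iff zero_le_mult_iff)
  then have Nu: "Nf u = 0" by simp
  then have "Re (herm u u) + (cmod (Nf u))^2 = 0" using Re_herm_lower[of u] uu by simp
  then show ?thesis using herm_zero_vec[OF _ Nu] by blast
qed



definition th :: "complex \<Rightarrow> bool" where "th z \<longleftrightarrow> (\<exists>e\<in>Eis. z = theta * e)"

lemma th_add: assumes "th a" "th b" shows "th (a + b)"
proof -
  obtain e1 where "e1 \<in> Eis" "a = theta * e1" using assms(1) th_def by auto
  moreover obtain e2 where "e2 \<in> Eis" "b = theta * e2" using assms(2) th_def by auto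
  ultimately have "a + b = theta * (e1 + e2)" "e1 + e2 \<in> Eis" by (auto simp: distrib_left)
  then show ?thesis unfolding th_def by blast
qed
lemma th_diff: assumes "th a" "th b" shows "th (a - b)"
proof -
  obtain e1 where "e1 \<in> Eis" "a = theta * e1" using assms(1) th_def by auto
  moreover obtain e2 where "e2 \<in> Eis" "b = theta * e2" using assms(2) th_def by auto
  ultimately have "a - b = theta * (e1 - e2)" "e1 - e2 \<in> Eis" by (auto simp: right_diff_distrib)
  then show ?thesis unfolding th_def by blast
qed
lemma th_mult: assumes "th a" "c \<in> Eis" shows "th (a * c)"
proof -
  obtain e1 where "e1 \<in> Eis" "a = theta * e1" using assms(1) th_def by auto
  then have "a * c = theta * (e1 * c)" "e1 * c \<in> Eis" using assms(2) by auto
  then show ?thesis unfolding th_def by blast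
qed
lemma th_intro: "w \<in> Eis \<Longrightarrow> th (theta * w)"
  unfolding th_def by blast

lemma div3: assumes "theta * z = 3 * w" shows "z = theta * (- w)"
proof -
  have "theta * (theta * (- w)) = - (theta * theta) * w" by (simp add: algebra_simps)
  also have "\<dots> = 3 * w" using theta_sq by simp
  finally have "theta * z = theta * (theta * (- w))" using assms by simp
  then show ?thesis using mult_left_cancel[OF theta_nz] by blast
qed

lemma div3_th: assumes "theta * z = 3 * w" "w \<in> Eis" shows "th z"
proof -
  have "z = theta * (- w)" using div3[OF assms(1)] .
  then show ?thesis using th_intro[OF Eis_uminus[OF assms(2)]] by simp
qed

lemma block_th:
  assumes E: "a \<in> Eis" "b \<in> Eis" "c \<in> Eis" "d \<in> Eis" "w1 \<in> Eis" "w2 \<in> Eis" "w3 \<in> Eis" "w4 \<in> Eis"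
  and h1: "3*a + cnj theta * b = 3*w1" and h2: "theta*a + 3*b + cnj theta*c = 3*w2"
  and h3: "theta*b + 3*c + cnj theta * d = 3*w3" and h4: "theta*c + 3*d = 3*w4"
  shows "th a \<and> th b \<and> th c \<and> th d"
proof -
  have "theta * b = 3 * (a - w1)" using h1 by (simp add: cnj_theta algebra_simps)
  then have tb: "th b" by (rule div3_th) (use E in auto)
  have "theta * (a - c) = 3 * (w2 - b)" using h2 by (simp add: cnj_theta algebra_simps)
  then have ac: "th (a - c)" by (rule div3_th) (use E in auto)
  have "theta * (b - d) = 3 * (w3 - c)" using h3 by (simp add: cnj_theta algebra_simps)
  then have bd: "th (b - d)" by (rule div3_th) (use E in auto)
  have "theta * c = 3 * (w4 - d)" using h4 by (simp add: cnj_theta algebra_simps)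
  then have tc: "th c" by (rule div3_th) (use E in auto)
  have td: "th d" using th_diff[OF tb bd] by simp
  have ta: "th a" using th_add[OF ac tc] by simp
  show ?thesis using ta tb tc td by simp
qed

definition ev :: "nat \<Rightarrow> nat \<Rightarrow> complex" where "ev k = (\<lambda>i. if i = k then 1 else 0)"

lemma ev_Lam: "k < 11 \<Longrightarrow> ev k \<in> Lam"
  unfolding Lam_def cvec_def ev_def by auto

lemma chordal_mult3: assumes "chordal_root r" "x \<in> Lam" shows "\<exists>w\<in>Eis. herm r x = 3 * w"
proof -
  have "herm r x \<in> (\<lambda>x. herm r x) ` Lam" using assms(2) by blast
  then show ?thesis using assms(1) unfolding chordal_root_def by auto
qed

lemma Lam_Eis: "x \<in> Lam \<Longrightarrow> i < 11 \<Longrightarrow> x i \<in> Eis"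
  unfolding Lam_def by auto

lemma herm_ev_right:
  "herm r (ev 0) = 3 * r 0"
  "herm r (ev 1) = 3 * r 1 + cnj theta * r 2"
  "herm r (ev 2) = theta * r 1 + 3 * r 2 + cnj theta * r 3"
  "herm r (ev 3) = theta * r 2 + 3 * r 3 + cnj theta * r 4"
  "herm r (ev 4) = theta * r 3 + 3 * r 4"
  "herm r (ev 5) = 3 * r 5 + cnj theta * r 6"
  "herm r (ev 6) = theta * r 5 + 3 * r 6 + cnj theta * r 7"
  "herm r (ev 7) = theta * r 6 + 3 * r 7 + cnj theta * r 8"
  "herm r (ev 8) = theta * r 7 + 3 * r 8"
  "herm r (ev 9) = cnj theta * r 10"
  "herm r (ev 10) = theta * r 9"
  by (simp_all add: herm_expand blk_def ev_def eval_nat_numeral)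

lemma chordal_coords: assumes ch: "chordal_root r"
  shows "th (r 1) \<and> th (r 2) \<and> th (r 3) \<and> th (r 4) \<and> th (r 5) \<and> th (r 6) \<and> th (r 7)
     \<and> th (r 8) \<and> th (r 9) \<and> th (r 10)"
proof -
  have rL: "r \<in> Lam" using ch unfolding chordal_root_def is_root_def by simp
  have w: "\<exists>w\<in>Eis. herm r (ev k) = 3 * w" if "k < 11" for k
    using chordal_mult3[OF ch ev_Lam[OF that]] .
  obtain w1 where w1: "w1 \<in> Eis" "herm r (ev 1) = 3 * w1" using w[of 1] by auto
  obtain w2 where w2: "w2 \<in> Eis" "herm r (ev 2) = 3 * w2" using w[of 2] by auto
  obtain w3 where w3: "w3 \<in> Eis" "herm r (ev 3) = 3 * w3" using w[of 3] by auto
  obtain w4 where w4: "w4 \<in> Eis" "herm r (ev 4) = 3 * w4" using w[of 4] by auto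
  obtain w5 where w5: "w5 \<in> Eis" "herm r (ev 5) = 3 * w5" using w[of 5] by auto
  obtain w6 where w6: "w6 \<in> Eis" "herm r (ev 6) = 3 * w6" using w[of 6] by auto
  obtain w7 where w7: "w7 \<in> Eis" "herm r (ev 7) = 3 * w7" using w[of 7] by auto
  obtain w8 where w8: "w8 \<in> Eis" "herm r (ev 8) = 3 * w8" using w[of 8] by auto
  obtain w9 where w9: "w9 \<in> Eis" "herm r (ev 9) = 3 * w9" using w[of 9] by auto
  obtain w10 where w10: "w10 \<in> Eis" "herm r (ev 10) = 3 * w10" using w[of 10] by auto
  have E: "r i \<in> Eis" if "i < 11" for i using Lam_Eis[OF rL that] .
  have b1: "th (r 1) \<and> th (r 2) \<and> th (r 3) \<and> th (r 4)"
    by (rule block_th[OF E E E E w1(1) w2(1) w3(1) w4(1)])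
       (use w1 w2 w3 w4 herm_ev_right in simp_all)
  have b5: "th (r 5) \<and> th (r 6) \<and> th (r 7) \<and> th (r 8)"
    by (rule block_th[OF E E E E w5(1) w6(1) w7(1) w8(1)])
       (use w5 w6 w7 w8 herm_ev_right in simp_all)
  have e10: "theta * r 10 = 3 * (- w9)" using w9(2) herm_ev_right(10) by (simp add: cnj_theta minus_equation_iff)
  have t10: "th (r 10)" using div3_th[OF e10 Eis_uminus[OF w9(1)]] .
  have e9: "theta * r 9 = 3 * w10" using w10(2) herm_ev_right(11) by simp
  have t9: "th (r 9)" using div3_th[OF e9 w10(1)] .
  show ?thesis using b1 b5 t9 t10 by simp
qed


lemma gram_cnj: "cnj (gram a i) = gram i a"
  unfolding gram_def by (auto simp: cnj_theta)

lemma herm_ev_gen: assumes "i < 11" shows "herm s (ev i) = (\<Sum>a<11. s a * gram a i)"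
proof -
  have inner: "(\<Sum>b<11. s a * gram a b * cnj (ev i b)) = s a * gram a i" for a
  proof -
    have "(\<Sum>b<11. s a * gram a b * cnj (ev i b)) = (\<Sum>b<11. if b = i then s a * gram a b else 0)"
      by (rule sum.cong) (auto simp: ev_def)
    also have "\<dots> = s a * gram a i" using assms by (simp add: sum.delta')
    finally show ?thesis .
  qed
  show ?thesis unfolding herm_def inner ..
qed

lemma herm_sum_ev: "herm r s = (\<Sum>i<11. r i * cnj (herm s (ev i)))"
proof -
  have "(\<Sum>i<11. r i * cnj (herm s (ev i))) = (\<Sum>i<11. r i * (\<Sum>a<11. gram i a * cnj (s a)))"
    by (intro sum.cong refl) (simp add: herm_ev_gen gram_cnj mult.commute)
  also have "\<dots> = herm r s" unfolding herm_def by (simp add: sum_distrib_left mult.assoc)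
  finally show ?thesis by simp
qed

lemma chordal_coords': assumes "chordal_root r" "1 \<le> i" "i < 11" shows "th (r i)"
proof -
  have "i = 1 \<or> i = 2 \<or> i = 3 \<or> i = 4 \<or> i = 5 \<or> i = 6 \<or> i = 7 \<or> i = 8 \<or> i = 9 \<or> i = 10"
    using assms(2,3) by presburger
  then show ?thesis using chordal_coords[OF assms(1)] by (elim disjE) simp_all
qed

definition m3 :: "complex \<Rightarrow> bool" where "m3 z \<longleftrightarrow> (\<exists>t\<in>Eis. z = 3 * theta * t)"

lemma m3_add: assumes "m3 a" "m3 b" shows "m3 (a + b)"
proof -
  obtain e1 where "e1 \<in> Eis" "a = 3 * theta * e1" using assms(1) m3_def by auto
  moreover obtain e2 where "e2 \<in> Eis" "b = 3 * theta * e2" using assms(2) m3_def by auto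
  ultimately have "a + b = 3 * theta * (e1 + e2)" "e1 + e2 \<in> Eis" by (auto simp: distrib_left)
  then show ?thesis unfolding m3_def by blast
qed

lemma m3_sum: "finite A \<Longrightarrow> (\<forall>i\<in>A. m3 (f i)) \<Longrightarrow> m3 (sum f A)"
proof (induction A rule: finite_induct)
  case empty
  then show ?case unfolding m3_def by (intro bexI[of _ 0]) auto
next
  case (insert x F)
  then show ?case by (simp add: m3_add)
qed

lemma chordal_pair: assumes r: "chordal_root r" and s: "chordal_root s"
  shows "\<exists>t\<in>Eis. herm r s = 3 * r 0 * cnj (s 0) + 3 * theta * t"
proof -
  define f where "f i = r i * cnj (herm s (ev i))" for i
  have hs: "herm r s = f 0 + (\<Sum>i\<in>{..<11} - {0}. f i)"
  proof -
    have "herm r s = (\<Sum>i<11. f i)" using herm_sum_ev[of r s] unfolding f_def .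
    also have "\<dots> = f 0 + (\<Sum>i\<in>{..<11} - {0}. f i)" by (rule sum.remove) auto
    finally show ?thesis .
  qed
  have f0: "f 0 = 3 * r 0 * cnj (s 0)" unfolding f_def herm_ev_right by simp
  have "m3 (f i)" if "i \<in> {..<11} - {0}" for i
  proof -
    have "th (r i)" using chordal_coords'[OF r] that by simp
    then obtain rho where rho: "rho \<in> Eis" "r i = theta * rho" unfolding th_def by auto
    have i11: "i < 11" using that by simp
    obtain w where w: "w \<in> Eis" "herm s (ev i) = 3 * w"
      using chordal_mult3[OF s ev_Lam[OF i11]] by blast
    have "f i = 3 * theta * (rho * cnj w)" unfolding f_def rho w by simp
    moreover have "rho * cnj w \<in> Eis" using rho(1) w(1) by (intro Eis_mult Eis_cnj)
    ultimately show ?thesis unfolding m3_def by blast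
  qed
  then have "m3 (\<Sum>i\<in>{..<11} - {0}. f i)" by (intro m3_sum) auto
  then obtain t where t: "t \<in> Eis" "(\<Sum>i\<in>{..<11} - {0}. f i) = 3 * theta * t" unfolding m3_def by auto
  have "herm r s = 3 * r 0 * cnj (s 0) + 3 * theta * t" using hs f0 t(2) by simp
  then show ?thesis using t(1) by blast
qed



lemma meet_vec: assumes "L \<in> hyperplane r" "L \<in> hyperplane s"
  shows "\<exists>v. Re (herm v v) < 0 \<and> herm v r = 0 \<and> herm v s = 0"
proof -
  have "L \<in> CH10" using assms(1) unfolding hyperplane_def by simp
  then obtain v where L: "L = cline v" "v \<in> cvec" "Re (herm v v) < 0" unfolding CH10_def by auto
  have "(\<lambda>i. 1 * v i) \<in> cline v" unfolding cline_def by blast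
  then have vL: "v \<in> L" using L by simp
  have "herm v r = 0" using assms(1) vL unfolding hyperplane_def by auto
  moreover have "herm v s = 0" using assms(2) vL unfolding hyperplane_def by auto
  ultimately show ?thesis using L by blast
qed

lemma Lam_out: "x \<in> Lam \<Longrightarrow> \<not> i < 11 \<Longrightarrow> x i = 0"
  unfolding Lam_def cvec_def by auto

lemma key:
  assumes r: "is_root r" and s: "is_root s" and v: "Re (herm v v) < 0"
    and vr: "herm v r = 0" and vs: "herm v s = 0"
  shows "cmod (herm r s) < 3 \<or> (\<forall>i. 3 * r i = herm r s * s i)"
proof (cases "cmod (herm r s) < 3")
  case True then show ?thesis by simp
next
  case False
  define a where "a = herm r s"
  define u where "u = (\<lambda>i. 3 * r i + (- a) * s i)"
  have rr: "herm r r = 3" and ss: "herm s s = 3" using r s unfolding is_root_def by auto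
  have sr: "herm s r = cnj a" unfolding a_def using herm_cnj[of s r] by simp
  have rv: "herm r v = 0" using herm_cnj[of r v] vr by simp
  have sv: "herm s v = 0" using herm_cnj[of s v] vs by simp
  have uv: "herm u v = 0" unfolding u_def herm_lin1 rv sv by simp
  have uu: "herm u u = 27 - 3 * (a * cnj a)"
    unfolding u_def herm_lin1 herm_lin2 rr ss sr a_def[symmetric] by (simp add: algebra_simps)
  have "Re (herm u u) = 27 - 3 * (cmod a)^2" unfolding uu using Re_nq[of a] by simp
  moreover have "cmod a \<ge> 3" using False a_def by simp
  then have "(cmod a)^2 \<ge> 3^2" by (rule power_mono) simp
  ultimately have "Re (herm u u) \<le> 0" by simp
  then have u0: "\<forall>i<11. u i = 0" using lorentz[OF v uv] by blast
  have "3 * r i = a * s i" for i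
  proof (cases "i < 11")
    case True then show ?thesis using u0 unfolding u_def by (simp add: algebra_simps)
  next
    case False
    have "r \<in> Lam" "s \<in> Lam" using r s unfolding is_root_def by auto
    then have "r i = 0" "s i = 0" using Lam_out False by blast+
    then show ?thesis by simp
  qed
  then show ?thesis unfolding a_def by simp
qed

lemma chordal_is_root: "chordal_root r \<Longrightarrow> is_root r" unfolding chordal_root_def by simp
lemma nodal_is_root: "nodal_root r \<Longrightarrow> is_root r" unfolding nodal_root_def by simp
lemma root_Lam: "is_root r \<Longrightarrow> r \<in> Lam" unfolding is_root_def by simp

lemma chordal_not_orth:
  assumes r: "chordal_root r" and s: "chordal_root s" shows "herm r s \<noteq> 0"
proof
  assume h: "herm r s = 0"
  have r0: "r 0 \<in> Eis" and s0: "s 0 \<in> Eis"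
    using Lam_Eis root_Lam chordal_is_root r s by auto
  obtain t where t: "t \<in> Eis" "herm r s = 3 * r 0 * cnj (s 0) + 3 * theta * t"
    using chordal_pair[OF r s] by blast
  obtain t1 where t1: "t1 \<in> Eis" "herm r r = 3 * r 0 * cnj (r 0) + 3 * theta * t1"
    using chordal_pair[OF r r] by blast
  obtain t2 where t2: "t2 \<in> Eis" "herm s s = 3 * s 0 * cnj (s 0) + 3 * theta * t2"
    using chordal_pair[OF s s] by blast
  have rr: "herm r r = 3" and ss: "herm s s = 3"
    using r s chordal_is_root unfolding is_root_def by auto
  have "3 * (r 0 * cnj (s 0) + theta * t) = 0" using t(2) h by (simp add: algebra_simps)
  then have e1: "r 0 * cnj (s 0) = - theta * t" by (simp add: add_eq_0_iff)
  have p1: "3 * (r 0 * cnj (r 0) + theta * t1) = 3 * 1" using t1(2) rr by (simp add: algebra_simps)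
  have q1: "r 0 * cnj (r 0) + theta * t1 = 1" using mult_left_cancel[of "3::complex", THEN iffD1, OF _ p1] by simp
  have e2: "1 - r 0 * cnj (r 0) = theta * t1" by (subst q1[symmetric]) simp
  have p2: "3 * (s 0 * cnj (s 0) + theta * t2) = 3 * 1" using t2(2) ss by (simp add: algebra_simps)
  have q2: "s 0 * cnj (s 0) + theta * t2 = 1" using mult_left_cancel[of "3::complex", THEN iffD1, OF _ p2] by simp
  have e3: "1 - s 0 * cnj (s 0) = theta * t2" by (subst q2[symmetric]) simp
  have "1 = (1 - r 0 * cnj (r 0)) + r 0 * cnj (r 0) * (1 - s 0 * cnj (s 0))
       + (r 0 * cnj (s 0)) * (cnj (r 0) * s 0)" by (simp add: algebra_simps)
  also have "\<dots> = theta * (t1 + r 0 * cnj (r 0) * t2 - t * (cnj (r 0) * s 0))"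
    unfolding e1 e2 e3 by (simp add: algebra_simps)
  finally have "1 = theta * (t1 + r 0 * cnj (r 0) * t2 - t * (cnj (r 0) * s 0))" .
  moreover have "t1 + r 0 * cnj (r 0) * t2 - t * (cnj (r 0) * s 0) \<in> Eis"
    using r0 s0 t t1 t2 by (intro Eis_diff Eis_add Eis_mult Eis_cnj) auto
  ultimately show False using one_not_theta by blast
qed

theorem theorem8p2:
  shows "(\<forall>r s. chordal_root r \<and> chordal_root s \<and> hyperplane r \<noteq> hyperplane s
              \<longrightarrow> hyperplane r \<inter> hyperplane s = {})
       \<and> (\<forall>r s. nodal_root r \<and> chordal_root s \<and> hyperplane r \<inter> hyperplane s \<noteq> {}
              \<longrightarrow> herm r s = 0)"
proof (intro conjI allI impI)
  fix r s
  assume h: "chordal_root r \<and> chordal_root s \<and> hyperplane r \<noteq> hyperplane s"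
  then have r: "chordal_root r" and s: "chordal_root s" and ne: "hyperplane r \<noteq> hyperplane s" by auto
  show "hyperplane r \<inter> hyperplane s = {}"
  proof (rule ccontr)
    assume "hyperplane r \<inter> hyperplane s \<noteq> {}"
    then obtain L where "L \<in> hyperplane r" "L \<in> hyperplane s" by auto
    then obtain v where v: "Re (herm v v) < 0" "herm v r = 0" "herm v s = 0"
      using meet_vec by blast
    have K: "cmod (herm r s) < 3 \<or> (\<forall>i. 3 * r i = herm r s * s i)"
      using key[OF chordal_is_root[OF r] chordal_is_root[OF s] v] .
    obtain e where e: "e \<in> Eis" "herm r s = 3 * e"
      using chordal_mult3[OF r root_Lam[OF chordal_is_root[OF s]]] by blast
    have nz: "herm r s \<noteq> 0" using chordal_not_orth[OF r s] .
    show False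
    proof (cases "cmod (herm r s) < 3")
      case True
      then have "cmod e < 1" using e by (simp add: norm_mult)
      then have "e = 0" using Eis_small e by blast
      then show False using nz e by simp
    next
      case False
      then have eq: "\<forall>i. 3 * r i = herm r s * s i" using K by simp
      define c where "c = herm r s / 3"
      have rc: "r = (\<lambda>i. c * s i)"
      proof
        fix i show "r i = c * s i" using eq[rule_format, of i] unfolding c_def by (simp add: field_simps)
      qed
      have cnz: "c \<noteq> 0" using nz unfolding c_def by simp
      have "hyperplane r = hyperplane s"
        unfolding hyperplane_def rc herm_scale2 using cnz by simp
      then show False using ne by simp
    qed
  qed
next
  fix r s
  assume h: "nodal_root r \<and> chordal_root s \<and> hyperplane r \<inter> hyperplane s \<noteq> {}"
  then have r: "nodal_root r" and s: "chordal_root s" by auto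
  obtain L where "L \<in> hyperplane r" "L \<in> hyperplane s" using h by auto
  then obtain v where v: "Re (herm v v) < 0" "herm v r = 0" "herm v s = 0"
    using meet_vec by blast
  have K: "cmod (herm r s) < 3 \<or> (\<forall>i. 3 * r i = herm r s * s i)"
    using key[OF nodal_is_root[OF r] chordal_is_root[OF s] v] .
  obtain e where e: "e \<in> Eis" "herm s r = 3 * e"
    using chordal_mult3[OF s root_Lam[OF nodal_is_root[OF r]]] by blast
  have a: "herm r s = 3 * cnj e" using herm_cnj[of r s] e by simp
  show "herm r s = 0"
  proof (cases "cmod (herm r s) < 3")
    case True
    then have "cmod (cnj e) < 1" using a by (simp add: norm_mult)
    then have "cnj e = 0" using Eis_small Eis_cnj e by blast
    then show ?thesis using a by simp
  next
    case False
    then have eq: "\<forall>i. 3 * r i = herm r s * s i" using K by simp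
    have rc: "r = (\<lambda>i. cnj e * s i)"
    proof
      fix i show "r i = cnj e * s i" using eq[rule_format, of i] unfolding a by simp
    qed
    have "theta * 1 \<in> {theta * e | e. e \<in> Eis}" by blast
    then have "theta \<in> (\<lambda>x. herm r x) ` Lam" using r unfolding nodal_root_def by simp
    then obtain x where x: "x \<in> Lam" "herm r x = theta" by auto
    obtain e' where e': "e' \<in> Eis" "herm s x = 3 * e'" using chordal_mult3[OF s x(1)] by blast
    have "theta = cnj e * (3 * e')" using x(2) e'(2) unfolding rc herm_scale1 by simp
    also have "\<dots> = - (theta * theta) * (cnj e * e')" using theta_sq by simp
    finally have "theta * 1 = theta * (theta * (- (cnj e * e')))" by (simp add: algebra_simps)
    then have "1 = theta * (- (cnj e * e'))" using mult_left_cancel[OF theta_nz] by blast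
    moreover have "- (cnj e * e') \<in> Eis" using e e' by blast
    ultimately show ?thesis using one_not_theta by blast
  qed
qed


end
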